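(* For any $n\geq 2$, the class $\mathcal{PO}_n$ of all finite partial orders of dimension at most $n$ does not satisfy the amalgamation property.
   Context: The dimension of a partial order $(P,<)$ is the minimum number of linear orders on $P$ whose intersection is $<$. Embeddings of partial orders are injective maps $f$ with $a<b\iff f(a)<f(b)$. A class $\mathcal{K}$ satisfies the amalgamation property if for all $\mathbf{A},\mathbf{B},\mathbf{C}\in\mathcal{K}$ and embeddings $e:\mathbf{A}\to\mathbf{B}$, $f:\mathbf{A}\to\mathbf{C}$, there are $\mathbf{D}\in\mathcal{K}$ and embeddings $g:\mathbf{B}\to\mathbf{D}$, $h:\mathbf{C}\to\mathbf{D}$ with $g\circ e=h\circ f$. *)

theory Defs
  imports Main
begin

text \<open>Carriers are taken inside the countable universe nat; since all structures in the
  class are finite, every finite partial order is isomorphic to one of these, and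
  the amalgamation property is invariant under isomorphism.\<close>

type_synonym poset = "nat set \<times> nat rel"

definition strict_po :: "poset \<Rightarrow> bool" where
  "strict_po X \<longleftrightarrow> (let (P, r) = X in
     r \<subseteq> P \<times> P \<and> (\<forall>a\<in>P. (a, a) \<notin> r) \<and>
     (\<forall>a\<in>P. \<forall>b\<in>P. \<forall>c\<in>P. (a, b) \<in> r \<longrightarrow> (b, c) \<in> r \<longrightarrow> (a, c) \<in> r))"

definition strict_linear_order_on :: "nat set \<Rightarrow> nat rel \<Rightarrow> bool" where
  "strict_linear_order_on P L \<longleftrightarrow> strict_po (P, L) \<and>
     (\<forall>a\<in>P. \<forall>b\<in>P. a \<noteq> b \<longrightarrow> (a, b) \<in> L \<or> (b, a) \<in> L)"

definition realizes :: "poset \<Rightarrow> nat \<Rightarrow> (nat \<Rightarrow> nat rel) \<Rightarrow> bool" where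
  "realizes X k L \<longleftrightarrow> (let (P, r) = X in
     (\<forall>i<k. strict_linear_order_on P (L i)) \<and>
     r = {(a, b). a \<in> P \<and> b \<in> P \<and> (\<forall>i<k. (a, b) \<in> L i)})"

definition dimension :: "poset \<Rightarrow> nat" where
  "dimension X = (LEAST k. \<exists>L. realizes X k L)"

definition PO :: "nat \<Rightarrow> poset set" where
  "PO n = {X. finite (fst X) \<and> strict_po X \<and> dimension X \<le> n}"

definition embedding :: "(nat \<Rightarrow> nat) \<Rightarrow> poset \<Rightarrow> poset \<Rightarrow> bool" where
  "embedding f X Y \<longleftrightarrow>
     f ` fst X \<subseteq> fst Y \<and> inj_on f (fst X) \<and>
     (\<forall>a\<in>fst X. \<forall>b\<in>fst X. (a, b) \<in> snd X \<longleftrightarrow> (f a, f b) \<in> snd Y)"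

definition amalgamation_property :: "poset set \<Rightarrow> bool" where
  "amalgamation_property K \<longleftrightarrow>
     (\<forall>A\<in>K. \<forall>B\<in>K. \<forall>C\<in>K. \<forall>e f. embedding e A B \<and> embedding f A C \<longrightarrow>
        (\<exists>D\<in>K. \<exists>g h. embedding g B D \<and> embedding h C D \<and>
           (\<forall>a\<in>fst A. g (e a) = h (f a))))"

end

theory Submission
  imports Defs "HOL-Library.Product_Lexorder"
begin


lemma strict_po_iff: "strict_po (P, r) \<longleftrightarrow> r \<subseteq> P \<times> P \<and> (\<forall>a\<in>P. (a, a) \<notin> r) \<and>
     (\<forall>a\<in>P. \<forall>b\<in>P. \<forall>c\<in>P. (a, b) \<in> r \<longrightarrow> (b, c) \<in> r \<longrightarrow> (a, c) \<in> r)"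
  by (simp add: strict_po_def)

lemma realizes_iff: "realizes (P, r) k L \<longleftrightarrow> (\<forall>i<k. strict_linear_order_on P (L i)) \<and>
     r = {(a, b). a \<in> P \<and> b \<in> P \<and> (\<forall>i<k. (a, b) \<in> L i)}"
  by (simp add: realizes_def)

definition rel_of :: "nat set \<Rightarrow> (nat \<Rightarrow> 'a::linorder) \<Rightarrow> nat rel" where
  "rel_of P \<rho> = {(x, y). x \<in> P \<and> y \<in> P \<and> \<rho> x < \<rho> y}"

lemma rank_slo:
  fixes \<rho> :: "nat \<Rightarrow> 'a::linorder"
  assumes "inj_on \<rho> P"
  shows "strict_linear_order_on P (rel_of P \<rho>)"
  using assms unfolding strict_linear_order_on_def strict_po_iff rel_of_def inj_on_def
  by (auto, metis neq_iff)

lemma realizer_lower: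
  assumes R: "realizes (P, r) k L"
    and xy: "\<forall>i\<le>n. x i \<in> P \<and> y i \<in> P \<and> x i \<noteq> y i \<and> (x i, y i) \<notin> r"
    and cross: "\<forall>i\<le>n. \<forall>j\<le>n. i \<noteq> j \<longrightarrow> (x i, y j) \<in> r"
  shows "n < k"
proof (rule ccontr)
  assume nk: "\<not> n < k"
  have lin: "\<forall>i<k. strict_linear_order_on P (L i)"
    and req: "r = {(a, b). a \<in> P \<and> b \<in> P \<and> (\<forall>i<k. (a, b) \<in> L i)}"
    using R by (simp_all add: realizes_iff)
  have "\<forall>i\<le>n. \<exists>c<k. (y i, x i) \<in> L c"
  proof (intro allI impI)
    fix i assume i: "i \<le> n"
    then have "(x i, y i) \<notin> r" "x i \<in> P" "y i \<in> P" "x i \<noteq> y i" using xy by auto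
    then obtain c where c: "c < k" "(x i, y i) \<notin> L c" using req by auto
    then have "(y i, x i) \<in> L c" using lin \<open>x i \<in> P\<close> \<open>y i \<in> P\<close> \<open>x i \<noteq> y i\<close>
      unfolding strict_linear_order_on_def by blast
    then show "\<exists>c<k. (y i, x i) \<in> L c" using c by blast
  qed
  then have "\<forall>i. \<exists>c. i \<le> n \<longrightarrow> c < k \<and> (y i, x i) \<in> L c" by blast
  then obtain c where c: "\<forall>i\<le>n. c i < k \<and> (y i, x i) \<in> L (c i)" by (metis (no_types))
  have "\<not> inj_on c {..n}"
  proof
    assume "inj_on c {..n}"
    moreover have "c ` {..n} \<subseteq> {..<k}" using c by auto
    ultimately have "card {..n} \<le> card {..<k}" by (intro card_inj_on_le) auto
    then show False using nk by simp
  qed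
  then obtain i j where ij: "i \<le> n" "j \<le> n" "i \<noteq> j" "c i = c j"
    unfolding inj_on_def by auto
  define l where "l = c i"
  have lk: "l < k" using c ij l_def by auto
  have sub: "r \<subseteq> L l" using req lk by auto
  have slo: "strict_po (P, L l)" using lin lk strict_linear_order_on_def by auto
  have P: "x i \<in> P" "y i \<in> P" "x j \<in> P" "y j \<in> P" using xy ij by auto
  have e1: "(y i, x i) \<in> L l" "(y j, x j) \<in> L l" using c ij l_def by auto
  have e2: "(x i, y j) \<in> L l" "(x j, y i) \<in> L l" using cross ij sub by auto
  from slo have tr: "\<And>a b c. a \<in> P \<Longrightarrow> b \<in> P \<Longrightarrow> c \<in> P \<Longrightarrow> (a, b) \<in> L l \<Longrightarrow> (b, c) \<in> L l \<Longrightarrow> (a, c) \<in> L l"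
    and irr: "\<And>a. a \<in> P \<Longrightarrow> (a, a) \<notin> L l" unfolding strict_po_iff by blast+
  have "(x i, x j) \<in> L l" using tr[OF P(1) P(4) P(3)] e1 e2 by blast
  moreover have "(x j, x i) \<in> L l" using tr[OF P(3) P(2) P(1)] e1 e2 by blast
  ultimately have "(x i, x i) \<in> L l" using tr[OF P(1) P(3) P(1)] by blast
  then show False using irr P by blast
qed


lemma height_mono:
  assumes "finite P" "strict_po (P, r)" "(x, y) \<in> r"
  shows "card {z\<in>P. (z, x) \<in> r} < card {z\<in>P. (z, y) \<in> r}"
proof (rule psubset_card_mono)
  show "finite {z\<in>P. (z, y) \<in> r}" using assms(1) by simp
  have xy: "x \<in> P" "y \<in> P" "(x,x) \<notin> r" using assms unfolding strict_po_iff by auto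
  have "{z\<in>P. (z, x) \<in> r} \<subseteq> {z\<in>P. (z, y) \<in> r}"
    using assms(2,3) xy unfolding strict_po_iff by blast
  moreover have "x \<in> {z\<in>P. (z, y) \<in> r}" "x \<notin> {z\<in>P. (z, x) \<in> r}" using xy assms(3) by auto
  ultimately show "{z\<in>P. (z, x) \<in> r} \<subset> {z\<in>P. (z, y) \<in> r}" by blast
qed

lemma exists_realizer:
  assumes fin: "finite P" and po: "strict_po (P, r)"
  shows "\<exists>k L. realizes (P, r) k L"
proof -
  define h where "h x = card {z\<in>P. (z, x) \<in> r}" for x
  define up where "up a = {y. y = a \<or> (a, y) \<in> r}" for a
  define key where "key a x = ((if x \<in> up a then 1 else 0 :: nat), h x, x)" for a x
  define xs where "xs = sorted_list_of_set P"
  define L where "L i = rel_of P (key (xs ! i))" for i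
  have sxs: "set xs = P" using fin xs_def by simp
  have rP: "r \<subseteq> P \<times> P" and irr: "\<forall>a\<in>P. (a, a) \<notin> r"
    and tr: "\<forall>a\<in>P. \<forall>b\<in>P. \<forall>c\<in>P. (a, b) \<in> r \<longrightarrow> (b, c) \<in> r \<longrightarrow> (a, c) \<in> r"
    using po unfolding strict_po_iff by blast+
  have hm: "(x, y) \<in> r \<Longrightarrow> h x < h y" for x y using height_mono[OF fin po] h_def by simp
  have upc: "y \<in> up a \<Longrightarrow> (y, z) \<in> r \<Longrightarrow> z \<in> up a" for a y z
  proof -
    assume y: "y \<in> up a" and yz: "(y, z) \<in> r"
    show "z \<in> up a"
    proof (cases "y = a")
      case True then show ?thesis using yz up_def by simp
    next
      case False
      then have ay: "(a, y) \<in> r" using y up_def by simp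
      have "a \<in> P" "y \<in> P" "z \<in> P" using ay yz rP by auto
      then have "(a, z) \<in> r" using tr ay yz by blast
      then show ?thesis using up_def by simp
    qed
  qed
  have ext: "(x, y) \<in> r \<Longrightarrow> (x, y) \<in> rel_of P (key a)" for a x y
  proof -
    assume xy: "(x, y) \<in> r"
    then have "x \<in> P" "y \<in> P" using rP by auto
    moreover have "key a x < key a y"
      using hm[OF xy] upc[of x a y] xy unfolding key_def by auto
    ultimately show ?thesis unfolding rel_of_def by auto
  qed
  have "realizes (P, r) (length xs) L"
    unfolding realizes_iff
  proof (intro conjI allI impI)
    fix i assume "i < length xs"
    show "strict_linear_order_on P (L i)" unfolding L_def
      by (rule rank_slo) (auto simp: inj_on_def key_def)
  next
    show "r = {(a, b). a \<in> P \<and> b \<in> P \<and> (\<forall>i<length xs. (a, b) \<in> L i)}"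
    proof (intro equalityI subsetI)
      fix p assume "p \<in> r"
      then show "p \<in> {(a, b). a \<in> P \<and> b \<in> P \<and> (\<forall>i<length xs. (a, b) \<in> L i)}"
        using ext rP L_def by (cases p) auto
    next
      fix p assume p: "p \<in> {(a, b). a \<in> P \<and> b \<in> P \<and> (\<forall>i<length xs. (a, b) \<in> L i)}"
      obtain a b where ab: "p = (a, b)" by (cases p)
      have a: "a \<in> P" "b \<in> P" using p ab by auto
      then obtain i where i: "i < length xs" "xs ! i = a" using sxs by (metis in_set_conv_nth)
      then have "(a, b) \<in> L i" using p ab by auto
      then have "key a a < key a b" unfolding L_def rel_of_def i by auto
      then have "b \<in> up a" "b \<noteq> a" unfolding key_def up_def by (auto split: if_splits)
      then show "p \<in> r" using ab up_def by auto
    qed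
  qed
  then show ?thesis by blast
qed



lemma all_less_2: "(\<forall>i<(2::nat). P i) \<longleftrightarrow> P 0 \<and> P 1"
  by (auto simp: less_2_cases_iff)

lemma dim_le:
  assumes "realizes X k L" "k \<le> n"
  shows "dimension X \<le> n"
proof -
  have "dimension X \<le> k" unfolding dimension_def by (rule Least_le) (use assms in blast)
  then show ?thesis using assms by simp
qed

definition PA :: "nat \<Rightarrow> nat set" where "PA n = {..<n} \<union> {2*n+2}"
definition PB :: "nat \<Rightarrow> nat set" where "PB n = {..<n} \<union> {2*n, 2*n+1, 2*n+2}"
definition rB :: "nat \<Rightarrow> nat rel" where
  "rB n = {(x,y). (x = 2*n \<and> y = 2*n+2) \<or> (x < n \<and> y = 2*n+1)}"
definition PC :: "nat \<Rightarrow> nat set" where "PC n = {..<2*n} \<union> {2*n+2}"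
definition rC :: "nat \<Rightarrow> nat rel" where
  "rC n = {(x,y). (x = 2*n+2 \<and> n \<le> y \<and> y < 2*n) \<or> (x < n \<and> n \<le> y \<and> y < 2*n \<and> y \<noteq> x + n)}"

definition rhoB0 :: "nat \<Rightarrow> nat \<Rightarrow> int" where
  "rhoB0 n x = (if x = 2*n then 2*int n+1 else if x = 2*n+1 then 2*int n else int x)"
definition rhoB1 :: "nat \<Rightarrow> nat \<Rightarrow> int" where
  "rhoB1 n x = (if x = 2*n then -2*int n-2 else if x = 2*n+2 then -2*int n-1
     else if x = 2*n+1 then 1 else - int x)"
definition rhoC :: "nat \<Rightarrow> nat \<Rightarrow> nat \<Rightarrow> int" where
  "rhoC n i x = (if x = 2*n+2 then int n else if x = i then int n+2 else if x = n+i then int n+1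
     else if x < n then int x else int n+3+int x)"

lemma A_in: assumes "n \<ge> 2" shows "(PA n, {}) \<in> PO n"
proof -
  define L where "L i = (if i = 0 then rel_of (PA n) (\<lambda>x. int x) else rel_of (PA n) (\<lambda>x. - int x))" for i :: nat
  have "realizes (PA n, {}) 2 L"
    unfolding realizes_iff all_less_2
  proof (intro conjI)
    show "strict_linear_order_on (PA n) (L 0)" unfolding L_def by simp (rule rank_slo, simp add: inj_on_def)
    show "strict_linear_order_on (PA n) (L 1)" unfolding L_def by simp (rule rank_slo, simp add: inj_on_def)
    show "{} = {(a, b). a \<in> PA n \<and> b \<in> PA n \<and> (a, b) \<in> L 0 \<and> (a, b) \<in> L 1}"
      unfolding L_def rel_of_def by auto
  qed
  then have "dimension (PA n, {}) \<le> n" using assms by (intro dim_le) auto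
  moreover have "finite (PA n)" unfolding PA_def by simp
  moreover have "strict_po (PA n, {})" unfolding strict_po_iff by simp
  ultimately show ?thesis unfolding PO_def by simp
qed

lemma B_in: assumes "n \<ge> 2" shows "(PB n, rB n) \<in> PO n"
proof -
  define L where "L i = (if i = 0 then rel_of (PB n) (rhoB0 n) else rel_of (PB n) (rhoB1 n))" for i :: nat
  have "realizes (PB n, rB n) 2 L"
    unfolding realizes_iff all_less_2
  proof (intro conjI)
    show "strict_linear_order_on (PB n) (L 0)" unfolding L_def
      by simp (rule rank_slo, auto simp add: inj_on_def rhoB0_def PB_def)
    show "strict_linear_order_on (PB n) (L 1)" unfolding L_def
      by simp (rule rank_slo, auto simp add: inj_on_def rhoB1_def PB_def)
    show "rB n = {(a, b). a \<in> PB n \<and> b \<in> PB n \<and> (a, b) \<in> L 0 \<and> (a, b) \<in> L 1}"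
    proof -
      have key: "((a,b) \<in> rB n \<longleftrightarrow> rhoB0 n a < rhoB0 n b \<and> rhoB1 n a < rhoB1 n b)"
        if "a \<in> PB n" "b \<in> PB n" for a b
      proof -
        have "a < n \<or> a = 2*n \<or> a = 2*n+1 \<or> a = 2*n+2" "b < n \<or> b = 2*n \<or> b = 2*n+1 \<or> b = 2*n+2"
          using that unfolding PB_def by auto
        then show ?thesis
          by (elim disjE) (auto simp: rB_def rhoB0_def rhoB1_def)
      qed
      have sub: "rB n \<subseteq> PB n \<times> PB n" unfolding rB_def PB_def by auto
      show ?thesis unfolding L_def rel_of_def using key sub by auto
    qed
  qed
  then have "dimension (PB n, rB n) \<le> n" using assms by (intro dim_le) auto
  moreover have "finite (PB n)" unfolding PB_def by simp
  moreover have "strict_po (PB n, rB n)" unfolding strict_po_iff PB_def rB_def by auto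
  ultimately show ?thesis unfolding PO_def by simp
qed


lemma C_in: assumes n2: "n \<ge> 2" shows "(PC n, rC n) \<in> PO n"
proof -
  define L where "L i = rel_of (PC n) (rhoC n i)" for i :: nat
  have inj: "inj_on (rhoC n i) (PC n)" if "i < n" for i
    using that unfolding inj_on_def rhoC_def PC_def by (auto split: if_splits)
  have fwd: "rhoC n i a < rhoC n i b" if "(a, b) \<in> rC n" "i < n" for a b i
    using that unfolding rhoC_def rC_def by auto
  have bwd: "(a, b) \<in> rC n" if ab: "a \<in> PC n" "b \<in> PC n" and H: "\<forall>i<n. rhoC n i a < rhoC n i b" for a b
  proof -
    have H': "rhoC n i a < rhoC n i b" if "i < n" for i using H that by blast
    have a_cases: "a < n \<or> (n \<le> a \<and> a < 2*n) \<or> a = 2*n+2" using ab unfolding PC_def by auto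
    have b_cases: "b < n \<or> (n \<le> b \<and> b < 2*n) \<or> b = 2*n+2" using ab unfolding PC_def by auto
    have ne: "a \<noteq> b" using H'[of 0] n2 by auto
    show ?thesis
    proof (cases "a < n")
      case True
      have "rhoC n a a < rhoC n a b" using H'[of a] True by simp
      then show ?thesis using True b_cases ne unfolding rhoC_def rC_def by (auto split: if_splits)
    next
      case aF: False
      show ?thesis
      proof (cases "a = 2*n+2")
        case True
        define i where "i = (if b = 0 then 1 else 0 :: nat)"
        have i: "i < n" "i \<noteq> b" using n2 unfolding i_def by auto
        have "rhoC n i a < rhoC n i b" using H' i by simp
        then show ?thesis using True b_cases ne i unfolding rhoC_def rC_def by (auto split: if_splits)
      next
        case False
        then have a2: "n \<le> a" "a < 2*n" using a_cases aF by auto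
        show ?thesis
        proof (cases "n \<le> b \<and> b < 2*n")
          case True
          have "rhoC n (b - n) a < rhoC n (b - n) b" using H'[of "b-n"] True by (simp add: less_diff_conv2)
          then have False using True a2 ne unfolding rhoC_def by (auto split: if_splits)
          then show ?thesis ..
        next
          case False
          define i where "i = (if a - n = 0 then 1 else 0 :: nat)"
          have i: "i < n" "i \<noteq> a - n" using n2 unfolding i_def by auto
          have "rhoC n i a < rhoC n i b" using H' i by simp
          then have False using False a2 b_cases i unfolding rhoC_def by (auto split: if_splits)
          then show ?thesis ..
        qed
      qed
    qed
  qed
  have sub: "rC n \<subseteq> PC n \<times> PC n" unfolding rC_def PC_def by auto
  have "realizes (PC n, rC n) n L"
    unfolding realizes_iff
  proof (intro conjI allI impI)
    fix i assume "i < n"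
    then show "strict_linear_order_on (PC n) (L i)" unfolding L_def by (intro rank_slo inj)
  next
    show "rC n = {(a, b). a \<in> PC n \<and> b \<in> PC n \<and> (\<forall>i<n. (a, b) \<in> L i)}"
      unfolding L_def rel_of_def using sub fwd bwd by auto
  qed
  then have "dimension (PC n, rC n) \<le> n" by (intro dim_le) auto
  moreover have "finite (PC n)" unfolding PC_def by simp
  moreover have "strict_po (PC n, rC n)" unfolding strict_po_iff PC_def rC_def by auto
  ultimately show ?thesis unfolding PO_def by simp
qed


theorem proposition2p3:
  fixes n :: nat
  assumes "n \<ge> 2"
  shows "\<not> amalgamation_property (PO n)"
proof
  assume AP: "amalgamation_property (PO n)"
  have embB: "embedding id (PA n, {}) (PB n, rB n)"
    unfolding embedding_def PA_def PB_def rB_def by auto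
  have embC: "embedding id (PA n, {}) (PC n, rC n)"
    unfolding embedding_def PA_def PC_def rC_def by auto
  obtain D g h where D: "D \<in> PO n" and g: "embedding g (PB n, rB n) D"
    and h: "embedding h (PC n, rC n) D" and gh: "\<forall>a\<in>PA n. g a = h a"
    using AP A_in[OF assms] B_in[OF assms] C_in[OF assms] embB embC
    unfolding amalgamation_property_def by fastforce
  obtain PD rD where Dp: "D = (PD, rD)" by (cases D)
  have fin: "finite PD" and po: "strict_po (PD, rD)" and dim: "dimension (PD, rD) \<le> n"
    using D Dp unfolding PO_def by auto
  have "\<exists>k L. realizes (PD, rD) k L" by (rule exists_realizer[OF fin po])
  then have "\<exists>L. realizes (PD, rD) (dimension (PD, rD)) L"
    unfolding dimension_def by (rule LeastI_ex)
  then obtain L where R: "realizes (PD, rD) (dimension (PD, rD)) L" by blast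
  have gi: "g ` PB n \<subseteq> PD" "inj_on g (PB n)"
    "\<And>a b. a \<in> PB n \<Longrightarrow> b \<in> PB n \<Longrightarrow> (a, b) \<in> rB n \<longleftrightarrow> (g a, g b) \<in> rD"
    using g Dp unfolding embedding_def by auto
  have hi: "h ` PC n \<subseteq> PD" "inj_on h (PC n)"
    "\<And>a b. a \<in> PC n \<Longrightarrow> b \<in> PC n \<Longrightarrow> (a, b) \<in> rC n \<longleftrightarrow> (h a, h b) \<in> rD"
    using h Dp unfolding embedding_def by auto
  have trD: "\<And>a b c. a \<in> PD \<Longrightarrow> b \<in> PD \<Longrightarrow> c \<in> PD \<Longrightarrow> (a, b) \<in> rD \<Longrightarrow> (b, c) \<in> rD \<Longrightarrow> (a, c) \<in> rD"
    using po unfolding strict_po_iff by blast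
  define x where "x i = (if i < n then h i else g (2*n))" for i
  define y where "y i = (if i < n then h (n+i) else g (2*n+1))" for i
  have "n < dimension (PD, rD)"
  proof (rule realizer_lower[OF R])
    show "\<forall>i\<le>n. x i \<in> PD \<and> y i \<in> PD \<and> x i \<noteq> y i \<and> (x i, y i) \<notin> rD"
    proof (intro allI impI)
      fix i assume i: "i \<le> n"
      show "x i \<in> PD \<and> y i \<in> PD \<and> x i \<noteq> y i \<and> (x i, y i) \<notin> rD"
      proof (cases "i < n")
        case True
        have m: "i \<in> PC n" "n + i \<in> PC n" "i \<noteq> n + i" "(i, n+i) \<notin> rC n"
          using True unfolding PC_def rC_def by auto
        then have "h i \<noteq> h (n+i)" using hi(2) by (meson inj_on_contraD)
        moreover have "(h i, h (n+i)) \<notin> rD" using hi(3)[OF m(1,2)] m(4) by simp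
        moreover have "h i \<in> PD" "h (n+i) \<in> PD" using hi(1) m by auto
        ultimately show ?thesis using True unfolding x_def y_def by simp
      next
        case False
        have m: "2*n \<in> PB n" "2*n+1 \<in> PB n" "(2*n, 2*n+1) \<notin> rB n"
          unfolding PB_def rB_def by auto
        then have "g (2*n) \<noteq> g (2*n+1)" using gi(2) m(1,2) inj_on_contraD[of g "PB n" "2*n" "2*n+1"] by simp
        moreover have "(g (2*n), g (2*n+1)) \<notin> rD" using gi(3)[OF m(1,2)] m(3) by simp
        moreover have "g (2*n) \<in> PD" "g (2*n+1) \<in> PD" using gi(1) m by auto
        ultimately show ?thesis using False unfolding x_def y_def by simp
      qed
    qed
  next
    show "\<forall>i\<le>n. \<forall>j\<le>n. i \<noteq> j \<longrightarrow> (x i, y j) \<in> rD"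
    proof (intro allI impI)
      fix i j assume ij: "i \<le> n" "j \<le> n" "i \<noteq> j"
      show "(x i, y j) \<in> rD"
      proof (cases "i < n")
        case iT: True
        show ?thesis
        proof (cases "j < n")
          case True
          have "i \<in> PC n" "n + j \<in> PC n" "(i, n+j) \<in> rC n"
            using True iT ij unfolding PC_def rC_def by auto
          then show ?thesis using hi iT True unfolding x_def y_def by auto
        next
          case False
          have "i \<in> PB n" "2*n+1 \<in> PB n" "(i, 2*n+1) \<in> rB n" "i \<in> PA n"
            using iT unfolding PB_def rB_def PA_def by auto
          then show ?thesis using gi gh iT False unfolding x_def y_def by auto
        qed
      next
        case iF: False
        then have jn: "j < n" using ij by auto
        have b: "2*n \<in> PB n" "2*n+2 \<in> PB n" "(2*n, 2*n+2) \<in> rB n" "2*n+2 \<in> PA n"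
          unfolding PB_def rB_def PA_def by auto
        have c: "2*n+2 \<in> PC n" "n+j \<in> PC n" "(2*n+2, n+j) \<in> rC n"
          using jn unfolding PC_def rC_def by auto
        have e1: "(g (2*n), h (2*n+2)) \<in> rD" using gi(3)[OF b(1,2)] b(3) gh b(4) by auto
        have e2: "(h (2*n+2), h (n+j)) \<in> rD" using hi(3)[OF c(1,2)] c(3) by auto
        have "g (2*n) \<in> PD" "h (2*n+2) \<in> PD" "h (n+j) \<in> PD" using gi(1) hi(1) b c by auto
        then have "(g (2*n), h (n+j)) \<in> rD" using trD e1 e2 by blast
        then show ?thesis using iF jn unfolding x_def y_def by auto
      qed
    qed
  qed
  then show False using dim by simp
qed

end
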